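(* Let $\mathbf{S}$ be a distributive meet semilattice, $n\ge1$ an integer and $F$ an upset of $\mathbf{S}$. The following are equivalent: (i) $F$ is a prime $n$-filter; (ii) $F$ is a prime upset which is a union of at most $n$ filters; (iii) $F$ is a prime upset and there is a meet-semilattice homomorphism $h\colon\mathbf{S}\to\mathbf{2}^n$ with $F=h^{-1}[P_n]$, where $\mathbf{2}^n$ is the Boolean lattice with $n$ atoms and $P_n$ its set of non-zero elements.
   Context: A meet semilattice is distributive if whenever $x\wedge y\le z$ there are $x'\ge x$, $y'\ge y$ with $x'\wedge y'=z$. For a set $X$, $Y\subseteq_n X$ means $Y$ is a non-empty subset of $X$ with $|Y|\le n$. An $n$-filter on $\mathbf{S}$ is an upset $F$ such that for every non-empty finite $X\subseteq F$: if $\bigwedge Y\in F$ for every $Y\subseteq_n X$ then $\bigwedge X\in F$; a filter is a $1$-filter (possibly empty or total). An upset $F$ of $\mathbf{S}$ is prime if its complement $\mathbf{S}\setminus F$ is upward directed, i.e. any two elements outside $F$ have a common upper bound outside $F$ (the empty complement counts). A prime $n$-filter is an $n$-filter which is a prime upset (equivalently, a meet-prime element of the lattice of $n$-filters on $\mathbf{S}$). *)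

theory Defs
  imports Main
begin

text \<open>A meet semilattice is modelled by the type class semilattice_inf (the whole
type is the carrier S). Finite meets are Inf_fin.\<close>

definition distributive_msl :: "('a::semilattice_inf) itself \<Rightarrow> bool" where
  "distributive_msl _ \<longleftrightarrow>
     (\<forall>x y z::'a. inf x y \<le> z \<longrightarrow> (\<exists>x' y'. x \<le> x' \<and> y \<le> y' \<and> inf x' y' = z))"

definition upset :: "('a::order) set \<Rightarrow> bool" where
  "upset F \<longleftrightarrow> (\<forall>x y. x \<in> F \<longrightarrow> x \<le> y \<longrightarrow> y \<in> F)"

definition n_filter :: "nat \<Rightarrow> ('a::semilattice_inf) set \<Rightarrow> bool" where
  "n_filter n F \<longleftrightarrow> upset F \<and>
     (\<forall>X. X \<noteq> {} \<and> finite X \<and> X \<subseteq> F \<longrightarrow>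
        (\<forall>Y. Y \<noteq> {} \<and> Y \<subseteq> X \<and> card Y \<le> n \<longrightarrow> Inf_fin Y \<in> F) \<longrightarrow> Inf_fin X \<in> F)"

definition filter_msl :: "('a::semilattice_inf) set \<Rightarrow> bool" where
  "filter_msl F \<longleftrightarrow> n_filter 1 F"

definition prime_upset :: "('a::order) set \<Rightarrow> bool" where
  "prime_upset F \<longleftrightarrow> upset F \<and>
     (\<forall>a b. a \<notin> F \<longrightarrow> b \<notin> F \<longrightarrow> (\<exists>c. a \<le> c \<and> b \<le> c \<and> c \<notin> F))"

definition prime_n_filter :: "nat \<Rightarrow> ('a::semilattice_inf) set \<Rightarrow> bool" where
  "prime_n_filter n F \<longleftrightarrow> n_filter n F \<and> prime_upset F"

text \<open>The Boolean lattice 2^n is represented as the subsets of {..<n}; a meet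
homomorphism into it maps meets to intersections; P_n is the set of non-empty elements.\<close>

definition msl_hom_2n :: "nat \<Rightarrow> (('a::semilattice_inf) \<Rightarrow> nat set) \<Rightarrow> bool" where
  "msl_hom_2n n h \<longleftrightarrow> (\<forall>x. h x \<subseteq> {..<n}) \<and> (\<forall>x y. h (inf x y) = h x \<inter> h y)"

end

theory Submission
  imports Defs
begin

lemma distD:
  assumes "distributive_msl TYPE('a::semilattice_inf)" "inf (x::'a) y \<le> z"
  shows "\<exists>x' y'. x \<le> x' \<and> y \<le> y' \<and> inf x' y' = z"
  using assms unfolding distributive_msl_def by blast

lemma E2:
  assumes D: "distributive_msl TYPE('a::semilattice_inf)"
    and h1: "inf (a::'a) u \<le> c" and h2: "inf a b \<le> c"
  shows "\<exists>w. u \<le> w \<and> b \<le> w \<and> inf a w \<le> c"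
proof -
  obtain a' b' where ab: "a \<le> a'" "b \<le> b'" "inf a' b' = c" using distD[OF D h2] by blast
  have "c \<le> b'" using inf.cobounded2[of a' b'] ab(3) by simp
  then have "inf a u \<le> b'" using h1 by (rule order_trans[rotated])
  then obtain a'' u' where au: "a \<le> a''" "u \<le> u'" "inf a'' u' = b'" using distD[OF D] by blast
  have bu: "b' \<le> u'" using inf.cobounded2[of a'' u'] au(3) by simp
  have "inf a u' \<le> b'" using inf_mono[OF au(1) order_refl, of u'] au(3) by simp
  moreover have "inf a u' \<le> a'" using ab(1) by (rule le_infI1)
  ultimately have "inf a u' \<le> inf a' b'" by (rule le_infI[rotated])
  then have "inf a u' \<le> c" using ab(3) by simp
  moreover have "b \<le> u'" using ab(2) bu by (rule order_trans)
  ultimately show ?thesis using au(2) by blast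
qed

lemma E:
  assumes D: "distributive_msl TYPE('a::semilattice_inf)" and "finite A"
  shows "(\<forall>b\<in>A. inf (a::'a) b \<le> c) \<Longrightarrow> \<exists>u. (\<forall>b\<in>A. b \<le> u) \<and> inf a u \<le> c"
  using assms(2)
proof (induction A rule: finite_induct)
  case empty
  then show ?case by (intro exI[of _ c]) simp
next
  case (insert b A)
  then obtain u where u: "\<forall>b\<in>A. b \<le> u" "inf a u \<le> c" by auto
  obtain w where "u \<le> w" "b \<le> w" "inf a w \<le> c" using E2[OF D u(2), of b] insert by auto
  then show ?case using u by (auto intro: order_trans)
qed

lemma F:
  assumes D: "distributive_msl TYPE('a::semilattice_inf)" and "finite I" "I \<noteq> {}"
  shows "Inf_fin (g ` I) \<le> (w::'a) \<Longrightarrow> \<exists>y. (\<forall>i\<in>I. g i \<le> y i) \<and> Inf_fin (y ` I) = w"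
  using assms(2,3)
proof (induction I arbitrary: w rule: finite_ne_induct)
  case (singleton x)
  then show ?case by (intro exI[of _ "\<lambda>_. w"]) simp
next
  case (insert i0 I)
  have "Inf_fin (g ` insert i0 I) = inf (g i0) (Inf_fin (g ` I))"
    using insert by (simp add: Inf_fin.insert)
  then obtain p q where pq: "g i0 \<le> p" "Inf_fin (g ` I) \<le> q" "inf p q = w"
    using distD[OF D] insert.prems by metis
  obtain y' where y': "\<forall>i\<in>I. g i \<le> y' i" "Inf_fin (y' ` I) = q" using insert.IH[OF pq(2)] by blast
  define y where "y = y'(i0 := p)"
  have img: "y ` I = y' ` I" using insert.hyps unfolding y_def by auto
  have "y ` insert i0 I = insert p (y ` I)" using insert.hyps unfolding y_def by auto
  moreover have "Inf_fin (insert p (y ` I)) = inf p (Inf_fin (y ` I))"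
    by (rule Inf_fin.insert) (use insert.hyps in auto)
  ultimately have "Inf_fin (y ` insert i0 I) = inf p (Inf_fin (y ` I))" by simp
  also have "\<dots> = w" using img y' pq by simp
  finally have eq: "Inf_fin (y ` insert i0 I) = w" .
  have "\<forall>i\<in>insert i0 I. g i \<le> y i" using y' pq insert.hyps unfolding y_def by auto
  then show ?case using eq by blast
qed

lemma Ylem:
  assumes D: "distributive_msl TYPE('a::semilattice_inf)" and "finite A" "A \<noteq> {}"
  shows "(\<forall>a\<in>A. \<forall>b\<in>A. a \<noteq> b \<longrightarrow> inf a b \<le> (c::'a)) \<Longrightarrow>
     \<exists>y. (\<forall>a\<in>A. \<forall>b\<in>A. b \<noteq> a \<longrightarrow> b \<le> y a) \<and> Inf_fin (y ` A) \<le> c"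
  using assms(2,3)
proof (induction A rule: finite_ne_induct)
  case (singleton x)
  then show ?case by (intro exI[of _ "\<lambda>_. c"]) simp
next
  case (insert a0 A)
  obtain g where g: "\<forall>a\<in>A. \<forall>b\<in>A. b \<noteq> a \<longrightarrow> b \<le> g a" "Inf_fin (g ` A) \<le> c"
    using insert by auto
  have "\<forall>b\<in>A. inf a0 b \<le> c" using insert by auto
  then obtain u where u: "\<forall>b\<in>A. b \<le> u" "inf a0 u \<le> c" using E[OF D insert.hyps(1)] by blast
  have "inf u a0 \<le> c" using u by (simp add: inf_commute)
  moreover have "inf u (Inf_fin (g ` A)) \<le> c" using g by (meson inf.coboundedI2)
  ultimately obtain w where w: "a0 \<le> w" "Inf_fin (g ` A) \<le> w" "inf u w \<le> c"
    using E2[OF D] by blast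
  obtain y' where y': "\<forall>i\<in>A. g i \<le> y' i" "Inf_fin (y' ` A) = w"
    using F[OF D insert.hyps(1,2) w(2)] by blast
  define y where "y = y'(a0 := u)"
  have img: "y ` A = y' ` A" using insert.hyps unfolding y_def by auto
  have wle: "\<forall>i\<in>A. w \<le> y' i"
  proof
    fix i assume "i \<in> A"
    then show "w \<le> y' i" using y'(2) Inf_fin.coboundedI[of "y' ` A" "y' i"] insert.hyps by auto
  qed
  have "y ` insert a0 A = insert u (y ` A)" using insert.hyps unfolding y_def by auto
  moreover have "Inf_fin (insert u (y ` A)) = inf u (Inf_fin (y ` A))"
    by (rule Inf_fin.insert) (use insert.hyps in auto)
  ultimately have "Inf_fin (y ` insert a0 A) = inf u (Inf_fin (y ` A))" by simp
  also have "\<dots> \<le> c" using img y' w by simp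
  finally have "Inf_fin (y ` insert a0 A) \<le> c" .
  moreover have "\<forall>a\<in>insert a0 A. \<forall>b\<in>insert a0 A. b \<noteq> a \<longrightarrow> b \<le> y a"
  proof (intro ballI impI)
    fix a b assume ab: "a \<in> insert a0 A" "b \<in> insert a0 A" "b \<noteq> a"
    show "b \<le> y a"
    proof (cases "a = a0")
      case True
      then show ?thesis using ab u unfolding y_def by auto
    next
      case False
      then have aA: "a \<in> A" "y a = y' a" using ab unfolding y_def by auto
      show ?thesis
      proof (cases "b = a0")
        case True
        have "w \<le> y' a" using wle aA by blast
        then show ?thesis using aA w(1) True by simp
      next
        case False
        then have "b \<in> A" using ab by auto
        then have "b \<le> g a" using aA g ab by blast
        moreover have "g a \<le> y' a" using aA y' by blast
        ultimately show ?thesis using aA by simp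
      qed
    qed
  qed
  ultimately show ?case by blast
qed

lemma prime_bound:
  assumes P: "prime_upset F" and "finite P" and d: "d \<notin> F" and "\<forall>p\<in>P. p \<notin> F"
  shows "\<exists>c. c \<notin> F \<and> d \<le> c \<and> (\<forall>p\<in>P. p \<le> c)"
  using assms(2,4)
proof (induction P rule: finite_induct)
  case empty
  then show ?case using d by auto
next
  case (insert p P)
  then obtain c where c: "c \<notin> F" "d \<le> c" "\<forall>p\<in>P. p \<le> c" by auto
  obtain c' where "c \<le> c'" "p \<le> c'" "c' \<notin> F" using P c(1) insert.prems unfolding prime_upset_def by blast
  then show ?case using c by (auto intro: order_trans)
qed

lemma upsetD: "upset F \<Longrightarrow> x \<in> F \<Longrightarrow> x \<le> y \<Longrightarrow> y \<in> F"
  unfolding upset_def by blast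

lemma card_bound:
  assumes D: "distributive_msl TYPE('a::semilattice_inf)"
    and PF: "prime_n_filter n (F::'a set)" and n1: "n \<ge> 1"
    and A: "finite A" "A \<subseteq> F" "\<forall>a\<in>A. \<forall>b\<in>A. a \<noteq> b \<longrightarrow> inf a b \<notin> F"
  shows "card A \<le> n"
proof (rule ccontr)
  assume "\<not> card A \<le> n"
  hence cA: "n < card A" by simp
  have nf: "n_filter n F" and pr: "prime_upset F" using PF unfolding prime_n_filter_def by auto
  have up: "upset F" using nf unfolding n_filter_def by auto
  have "card A \<ge> 2" using cA n1 by linarith
    then have "\<not>(\<forall>a1\<in>A. \<forall>a2\<in>A. a1 = a2)"
      by (simp add: card_le_Suc0_iff_eq[OF A(1), symmetric])
    then obtain a1 a2 where a12: "a1 \<in> A" "a2 \<in> A" "a1 \<noteq> a2" by blast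
    define Pm where "Pm = (\<lambda>(a,b). inf a b) ` {(a,b). a \<in> A \<and> b \<in> A \<and> a \<noteq> b}"
    have "finite Pm" unfolding Pm_def using A(1)
      by (intro finite_imageI) (auto intro: finite_subset[of _ "A \<times> A"])
    moreover have "\<forall>p\<in>Pm. p \<notin> F" using A(3) unfolding Pm_def by auto
    ultimately obtain c where c: "c \<notin> F" "\<forall>p\<in>Pm. p \<le> c"
      using prime_bound[OF pr _ A(3)[rule_format, OF a12]] by blast
    have "\<forall>a\<in>A. \<forall>b\<in>A. a \<noteq> b \<longrightarrow> inf a b \<le> c" using c unfolding Pm_def by blast
    then obtain y where y: "\<forall>a\<in>A. \<forall>b\<in>A. b \<noteq> a \<longrightarrow> b \<le> y a" "Inf_fin (y ` A) \<le> c"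
      using Ylem[OF D A(1)] a12 by blast
    define X where "X = y ` A"
    have Xf: "finite X" "X \<noteq> {}" unfolding X_def using A a12 by auto
    have XF: "X \<subseteq> F"
    proof
      fix t assume "t \<in> X"
      then obtain a where a: "a \<in> A" "t = y a" unfolding X_def by auto
      obtain b where "b \<in> A" "b \<noteq> a" using a12 by blast
      then show "t \<in> F" using y a A(2) up by (meson subsetD upsetD)
    qed
    have notin: "Inf_fin X \<notin> F" using y c up unfolding X_def by (meson upsetD)
    have "\<forall>Y. Y \<noteq> {} \<and> Y \<subseteq> X \<and> card Y \<le> n \<longrightarrow> Inf_fin Y \<in> F"
    proof (intro allI impI)
      fix Y assume Y: "Y \<noteq> {} \<and> Y \<subseteq> X \<and> card Y \<le> n"
      define pre where "pre = (\<lambda>t. SOME b. b \<in> A \<and> y b = t)"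
      have pre: "\<forall>t\<in>Y. pre t \<in> A \<and> y (pre t) = t"
      proof
        fix t assume "t \<in> Y"
        then have "\<exists>b. b \<in> A \<and> y b = t" using Y unfolding X_def by auto
        then show "pre t \<in> A \<and> y (pre t) = t" unfolding pre_def by (rule someI_ex)
      qed
      have fY: "finite Y" using Y Xf finite_subset by blast
      have "card (pre ` Y) \<le> n" using Y card_image_le[OF fY, of pre] by linarith
      then have "\<not> A \<subseteq> pre ` Y" using cA by (metis card_mono fY finite_imageI not_le order_trans)
      then obtain a where a: "a \<in> A" "a \<notin> pre ` Y" by blast
      have "\<forall>t\<in>Y. a \<le> t"
      proof
        fix t assume t: "t \<in> Y"
        then have "pre t \<noteq> a" using a by auto
        then show "a \<le> t" using y pre t a by metis
      qed
      then have "a \<le> Inf_fin Y" using fY Y by (simp add: Inf_fin.bounded_iff)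
      then show "Inf_fin Y \<in> F" using a A(2) up by (meson subsetD upsetD)
    qed
    then have "Inf_fin X \<in> F" using nf Xf XF unfolding n_filter_def by blast
    then show False using notin by simp
qed


lemma filter_closed:
  assumes "upset G" "\<forall>x y. x \<in> G \<longrightarrow> y \<in> G \<longrightarrow> inf x y \<in> G"
    and "finite X" "X \<noteq> {}"
  shows "X \<subseteq> (G::'a::semilattice_inf set) \<Longrightarrow> Inf_fin X \<in> G"
  using assms(3,4)
proof (induction X rule: finite_ne_induct)
  case (singleton x) then show ?case by simp
next
  case (insert x X)
  then have "Inf_fin (insert x X) = inf x (Inf_fin X)" by (simp add: Inf_fin.insert)
  moreover have "x \<in> G" "Inf_fin X \<in> G" using insert by auto
  ultimately show ?case using assms(2) by simp
qed

lemma filter_iff: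
  "filter_msl (G::'a::semilattice_inf set) \<longleftrightarrow> upset G \<and> (\<forall>x y. x \<in> G \<longrightarrow> y \<in> G \<longrightarrow> inf x y \<in> G)"
proof
  assume f: "filter_msl G"
  have up: "upset G" using f unfolding filter_msl_def n_filter_def by (rule conjunct1)
  have "inf x y \<in> G" if "x \<in> G" "y \<in> G" for x y
  proof -
    have "\<forall>Y. Y \<noteq> {} \<and> Y \<subseteq> {x,y} \<and> card Y \<le> 1 \<longrightarrow> Inf_fin Y \<in> G"
    proof (intro allI impI)
      fix Y assume Y: "Y \<noteq> {} \<and> Y \<subseteq> {x, y} \<and> card Y \<le> 1"
      then have "finite Y" using finite_subset[of Y "{x,y}"] by blast
      then have "card Y > 0" using Y by (simp add: card_gt_0_iff)
      then have "card Y = 1" using Y by linarith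
      then obtain t where "Y = {t}" by (rule card_1_singletonE)
      then show "Inf_fin Y \<in> G" using Y that by auto
    qed
    moreover have nf: "\<forall>X. X \<noteq> {} \<and> finite X \<and> X \<subseteq> G \<longrightarrow>
        (\<forall>Y. Y \<noteq> {} \<and> Y \<subseteq> X \<and> card Y \<le> 1 \<longrightarrow> Inf_fin Y \<in> G) \<longrightarrow> Inf_fin X \<in> G"
      using f unfolding filter_msl_def n_filter_def by (rule conjunct2)
    moreover have "{x,y} \<noteq> {} \<and> finite {x,y} \<and> {x,y} \<subseteq> G" using that by simp
    ultimately have "Inf_fin {x,y} \<in> G" by (metis (no_types))
    then show ?thesis by simp
  qed
  then show "upset G \<and> (\<forall>x y. x \<in> G \<longrightarrow> y \<in> G \<longrightarrow> inf x y \<in> G)" using up by blast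
next
  assume a: "upset G \<and> (\<forall>x y. x \<in> G \<longrightarrow> y \<in> G \<longrightarrow> inf x y \<in> G)"
  show "filter_msl G" unfolding filter_msl_def n_filter_def
  proof (intro conjI allI impI)
    show "upset G" using a by blast
    fix X assume "X \<noteq> {} \<and> finite X \<and> X \<subseteq> G"
    then show "Inf_fin X \<in> G" using filter_closed[of G X] a by blast
  qed
qed

lemma union_n_filter:
  assumes up: "upset (F::'a::semilattice_inf set)" and fin: "finite \<F>" and c: "card \<F> \<le> n"
    and fil: "\<forall>G\<in>\<F>. filter_msl G" and FU: "F = \<Union>\<F>"
  shows "n_filter n F"
  unfolding n_filter_def
proof (intro conjI allI impI up)
  fix X assume X: "X \<noteq> {} \<and> finite X \<and> X \<subseteq> F"
  assume H: "\<forall>Y. Y \<noteq> {} \<and> Y \<subseteq> X \<and> card Y \<le> n \<longrightarrow> Inf_fin Y \<in> F"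
  show "Inf_fin X \<in> F"
  proof (rule ccontr)
    assume nX: "Inf_fin X \<notin> F"
    have ex: "\<exists>x\<in>X. x \<notin> G" if "G \<in> \<F>" for G
    proof (rule ccontr)
      assume "\<not> (\<exists>x\<in>X. x \<notin> G)"
      then have "X \<subseteq> G" by blast
      then have "Inf_fin X \<in> G" using filter_closed[of G X] fil that X filter_iff by blast
      then show False using nX FU that by blast
    qed
    define pick where "pick = (\<lambda>G. SOME x. x \<in> X \<and> x \<notin> G)"
    have pk: "pick G \<in> X \<and> pick G \<notin> G" if "G \<in> \<F>" for G
    proof -
      have "\<exists>x. x \<in> X \<and> x \<notin> G" using ex[OF that] by blast
      then show ?thesis unfolding pick_def by (rule someI_ex)
    qed
    define Y where "Y = pick ` \<F>"
    have "\<F> \<noteq> {}" using X FU by auto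
    then have Yne: "Y \<noteq> {}" unfolding Y_def by simp
    have YX: "Y \<subseteq> X" using pk unfolding Y_def by auto
    have "card Y \<le> n" unfolding Y_def using card_image_le[OF fin, of pick] c by linarith
    then have "Inf_fin Y \<in> F" using H Yne YX by blast
    then obtain G0 where G0: "G0 \<in> \<F>" "Inf_fin Y \<in> G0" using FU by blast
    have fY: "finite Y" unfolding Y_def using fin by simp
    have "Inf_fin Y \<le> pick G0" using Inf_fin.coboundedI[OF fY] G0 unfolding Y_def by simp
    moreover have "upset G0" using G0 fil filter_iff by blast
    ultimately have "pick G0 \<in> G0" using G0 upsetD by blast
    then show False using pk[OF G0(1)] by blast
  qed
qed


lemma i_to_ii:
  assumes D: "distributive_msl TYPE('a::semilattice_inf)" and n1: "n \<ge> 1"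
    and PF: "prime_n_filter n (F::'a set)"
  shows "\<exists>\<F>. finite \<F> \<and> card \<F> \<le> n \<and> (\<forall>G\<in>\<F>. filter_msl G) \<and> F = \<Union>\<F>"
proof -
  have nf: "n_filter n F" and pr: "prime_upset F" using PF unfolding prime_n_filter_def by auto
  have up: "upset F" using nf unfolding n_filter_def by auto
  define inc where "inc = (\<lambda>A. finite A \<and> A \<subseteq> F \<and> (\<forall>a\<in>A. \<forall>b\<in>A. a \<noteq> b \<longrightarrow> inf a b \<notin> F))"
  have bnd: "\<forall>A. inc A \<longrightarrow> card A < n + 1"
    using card_bound[OF D PF n1] unfolding inc_def by (simp add: less_Suc_eq_le)
  have "inc {}" unfolding inc_def by simp
  then obtain A where A: "inc A" and mx: "\<forall>B. inc B \<longrightarrow> card B \<le> card A"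
    using ex_has_greatest_nat[of inc "{}" card "n+1"] bnd by blast
  have Af: "finite A" and AF: "A \<subseteq> F" and Ai: "\<forall>a\<in>A. \<forall>b\<in>A. a \<noteq> b \<longrightarrow> inf a b \<notin> F"
    using A unfolding inc_def by auto
  have "card A < n + 1" using bnd A by blast
  then have cAn: "card A \<le> n" by linarith
  define G where "G = (\<lambda>a. {x. inf x a \<in> F})"
  have GF: "G a \<subseteq> F" for a
  proof
    fix x assume "x \<in> G a"
    then have "inf x a \<in> F" unfolding G_def by simp
    then show "x \<in> F" using up upsetD inf.cobounded1 by blast
  qed
  have Gup: "upset (G a)" for a
    unfolding upset_def G_def
  proof (intro allI impI)
    fix x y assume "x \<in> {x. inf x a \<in> F}" "x \<le> y"
    moreover have "inf x a \<le> inf y a" using \<open>x \<le> y\<close> by (rule inf_mono) simp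
    ultimately show "y \<in> {x. inf x a \<in> F}" using up upsetD by blast
  qed
  have notF: "\<And>u v. u \<le> v \<Longrightarrow> v \<notin> F \<Longrightarrow> u \<notin> F" using up upsetD by blast
  have Gmeet: "inf x z \<in> G a" if a: "a \<in> A" and x: "x \<in> G a" and z: "z \<in> G a" for a x z
  proof (rule ccontr)
    assume nm: "inf x z \<notin> G a"
    define p where "p = inf x a"
    define q where "q = inf z a"
    have pF: "p \<in> F" and qF: "q \<in> F" using x z unfolding p_def q_def G_def by auto
    have pa: "p \<le> a" and qa: "q \<le> a" unfolding p_def q_def by auto
    have pq: "inf p q \<notin> F"
    proof -
      have "inf p q = inf (inf x z) a" unfolding p_def q_def by (simp add: inf_aci)
      then show ?thesis using nm unfolding G_def by simp
    qed
    have pb: "inf p b \<notin> F" "inf b p \<notin> F" if "b \<in> A" "b \<noteq> a" for b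
    proof -
      have "inf b a \<notin> F" using Ai a that by blast
      moreover have "inf p b \<le> inf b a" by (rule le_infI[OF inf.cobounded2 le_infI1[OF pa]])
      moreover have "inf b p \<le> inf b a" by (rule le_infI[OF inf.cobounded1 le_infI2[OF pa]])
      ultimately show "inf p b \<notin> F" "inf b p \<notin> F" using notF by blast+
    qed
    have qb: "inf q b \<notin> F" "inf b q \<notin> F" if "b \<in> A" "b \<noteq> a" for b
    proof -
      have "inf b a \<notin> F" using Ai a that by blast
      moreover have "inf q b \<le> inf b a" by (rule le_infI[OF inf.cobounded2 le_infI1[OF qa]])
      moreover have "inf b q \<le> inf b a" by (rule le_infI[OF inf.cobounded1 le_infI2[OF qa]])
      ultimately show "inf q b \<notin> F" "inf b q \<notin> F" using notF by blast+
    qed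
    have pnq: "p \<noteq> q" using pq pF by auto
    have pA: "p \<notin> A - {a}"
    proof
      assume "p \<in> A - {a}"
      then have "inf p p \<notin> F" using pb by blast
      then show False using pF by simp
    qed
    have qA: "q \<notin> A - {a}"
    proof
      assume "q \<in> A - {a}"
      then have "inf q q \<notin> F" using qb by blast
      then show False using qF by simp
    qed
    define B where "B = insert p (insert q (A - {a}))"
    have "inc B" unfolding inc_def B_def
    proof (intro conjI)
      show "finite (insert p (insert q (A - {a})))" using Af by simp
      show "insert p (insert q (A - {a})) \<subseteq> F" using AF pF qF by auto
      have pq': "inf q p \<notin> F" using pq by (simp add: inf_commute)
      show "\<forall>u\<in>insert p (insert q (A - {a})). \<forall>v\<in>insert p (insert q (A - {a})). u \<noteq> v \<longrightarrow> inf u v \<notin> F"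
      proof (intro ballI impI)
        fix u v assume u: "u \<in> insert p (insert q (A - {a}))" and v: "v \<in> insert p (insert q (A - {a}))"
          and uv: "u \<noteq> v"
        show "inf u v \<notin> F"
        proof (cases "u = p")
          case True
          then show ?thesis using v uv pq pb by blast
        next
          case up': False
          show ?thesis
          proof (cases "u = q")
            case True
            then show ?thesis using v uv pq' qb by blast
          next
            case False
            then have uA: "u \<in> A" "u \<noteq> a" using u up' by auto
            then show ?thesis using v uv Ai pb qb by blast
          qed
        qed
      qed
    qed
    moreover have "card B = card A + 1"
    proof -
      have "card (A - {a}) = card A - 1" using a Af by simp
      moreover have "card A > 0" using a Af card_gt_0_iff by blast
      ultimately show ?thesis unfolding B_def using Af pA qA pnq by simp
    qed
    moreover have "card B \<le> card A" using mx \<open>inc B\<close> by blast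
    ultimately show False by simp
  qed
  have Gfil: "filter_msl (G a)" if "a \<in> A" for a
    using Gup Gmeet that filter_iff by blast
  have cover: "F \<subseteq> \<Union>(G ` A)"
  proof
    fix x assume xF: "x \<in> F"
    show "x \<in> \<Union>(G ` A)"
    proof (rule ccontr)
      assume "x \<notin> \<Union>(G ` A)"
      then have nx: "\<forall>a\<in>A. inf x a \<notin> F" unfolding G_def by auto
      have xA: "x \<notin> A"
      proof
        assume "x \<in> A"
        then have "inf x x \<notin> F" using nx by blast
        then show False using xF by simp
      qed
      have nx': "\<forall>a\<in>A. inf a x \<notin> F" using nx by (simp add: inf_commute)
      have "\<forall>u\<in>insert x A. \<forall>v\<in>insert x A. u \<noteq> v \<longrightarrow> inf u v \<notin> F"
      proof (intro ballI impI)
        fix u v assume "u \<in> insert x A" "v \<in> insert x A" "u \<noteq> v"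
        then show "inf u v \<notin> F" using Ai nx nx' by blast
      qed
      then have "inc (insert x A)" unfolding inc_def using Af AF xF by simp
      moreover have "card (insert x A) = card A + 1" using xA Af by simp
      moreover have "card (insert x A) \<le> card A" using mx \<open>inc (insert x A)\<close> by blast
      ultimately show False by simp
    qed
  qed
  show ?thesis
  proof (intro exI conjI)
    show "finite (G ` A)" using Af by simp
    show "card (G ` A) \<le> n" using card_image_le[OF Af, of G] cAn by linarith
    show "\<forall>H\<in>G ` A. filter_msl H" using Gfil by blast
    show "F = \<Union>(G ` A)" using cover GF by blast
  qed
qed


lemma ii_to_iii:
  assumes fin: "finite \<F>" and c: "card \<F> \<le> n" and fil: "\<forall>G\<in>\<F>. filter_msl G"
    and FU: "(F::'a::semilattice_inf set) = \<Union>\<F>"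
  shows "\<exists>h. msl_hom_2n n h \<and> F = {x. h x \<noteq> {}}"
proof -
  obtain k :: nat and f where kf: "\<F> = f ` {i. i < k}" "inj_on f {i. i < k}"
    using finite_imp_nat_seg_image_inj_on[OF fin] by blast
  have "card \<F> = k" using kf(1) card_image[OF kf(2)] by simp
  then have kn: "k \<le> n" using c by simp
  define h where "h = (\<lambda>x. {i. i < k \<and> x \<in> f i})"
  have filf: "upset (f i) \<and> (\<forall>x y. x \<in> f i \<longrightarrow> y \<in> f i \<longrightarrow> inf x y \<in> f i)" if "i < k" for i
  proof -
    have "f i \<in> \<F>" using kf(1) that by simp
    then have "filter_msl (f i)" using fil by blast
    then show ?thesis by (rule filter_iff[THEN iffD1])
  qed
  have "msl_hom_2n n h" unfolding msl_hom_2n_def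
  proof (intro conjI allI)
    fix x show "h x \<subseteq> {..<n}" unfolding h_def using kn by auto
  next
    fix x y
    show "h (inf x y) = h x \<inter> h y"
    proof
      show "h (inf x y) \<subseteq> h x \<inter> h y"
      proof
        fix i assume "i \<in> h (inf x y)"
        then have i: "i < k" "inf x y \<in> f i" unfolding h_def by auto
        then have "upset (f i)" using filf by blast
        then have "x \<in> f i" "y \<in> f i" using i(2) upsetD[OF _ _ inf.cobounded1] upsetD[OF _ _ inf.cobounded2] by blast+
        then show "i \<in> h x \<inter> h y" unfolding h_def using i by auto
      qed
      show "h x \<inter> h y \<subseteq> h (inf x y)"
      proof
        fix i assume "i \<in> h x \<inter> h y"
        then have i: "i < k" "x \<in> f i" "y \<in> f i" unfolding h_def by auto
        then have "inf x y \<in> f i" using filf by blast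
        then show "i \<in> h (inf x y)" unfolding h_def using i by auto
      qed
    qed
  qed
  moreover have "F = {x. h x \<noteq> {}}" unfolding h_def FU kf(1) by blast
  ultimately show ?thesis by blast
qed

lemma iii_to_ii:
  assumes h: "msl_hom_2n n h" and FU: "(F::'a::semilattice_inf set) = {x. h x \<noteq> {}}"
  shows "\<exists>\<F>. finite \<F> \<and> card \<F> \<le> n \<and> (\<forall>G\<in>\<F>. filter_msl G) \<and> F = \<Union>\<F>"
proof -
  have hs: "h x \<subseteq> {..<n}" and hm: "h (inf x y) = h x \<inter> h y" for x y
    using h unfolding msl_hom_2n_def by auto
  define G where "G = (\<lambda>i. {x. i \<in> h x})"
  have "filter_msl (G i)" for i
    unfolding filter_iff
  proof (intro conjI allI impI)
    show "upset (G i)" unfolding upset_def G_def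
    proof (intro allI impI)
      fix x y assume "x \<in> {x. i \<in> h x}" "x \<le> y"
      then have "inf x y = x" by (simp add: inf.absorb1)
      then have "h x = h x \<inter> h y" using hm[of x y] by simp
      then show "y \<in> {x. i \<in> h x}" using \<open>x \<in> {x. i \<in> h x}\<close> by auto
    qed
  next
    fix x y assume "x \<in> G i" "y \<in> G i"
    then show "inf x y \<in> G i" unfolding G_def using hm by auto
  qed
  moreover have "finite (G ` {..<n})" by simp
  moreover have "card (G ` {..<n}) \<le> n" using card_image_le[of "{..<n}" G] by simp
  moreover have "F = \<Union>(G ` {..<n})"
  proof (rule set_eqI)
    fix x
    have "h x \<noteq> {} \<longleftrightarrow> (\<exists>i<n. i \<in> h x)" using hs[of x] by blast
    then show "x \<in> F \<longleftrightarrow> x \<in> \<Union>(G ` {..<n})" unfolding FU G_def by auto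
  qed
  ultimately show ?thesis by blast
qed

theorem mainTheorem6:
  fixes F :: "('a::semilattice_inf) set" and n :: nat
  assumes "distributive_msl TYPE('a)"
    and "n \<ge> 1"
    and "upset F"
  shows "(prime_n_filter n F \<longleftrightarrow>
           (prime_upset F \<and> (\<exists>\<F>. finite \<F> \<and> card \<F> \<le> n \<and> (\<forall>G\<in>\<F>. filter_msl G) \<and> F = \<Union>\<F>)))
       \<and> ((prime_upset F \<and> (\<exists>\<F>. finite \<F> \<and> card \<F> \<le> n \<and> (\<forall>G\<in>\<F>. filter_msl G) \<and> F = \<Union>\<F>))
           \<longleftrightarrow> (prime_upset F \<and> (\<exists>h. msl_hom_2n n h \<and> F = {x. h x \<noteq> {}})))"
proof -
  have 1: "prime_upset F \<and> (\<exists>\<F>. finite \<F> \<and> card \<F> \<le> n \<and> (\<forall>G\<in>\<F>. filter_msl G) \<and> F = \<Union>\<F>)" if PF: "prime_n_filter n F"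
    using i_to_ii[OF assms(1,2) PF] PF unfolding prime_n_filter_def by blast
  have 2: "prime_n_filter n F" if a: "prime_upset F \<and> (\<exists>\<F>. finite \<F> \<and> card \<F> \<le> n \<and> (\<forall>G\<in>\<F>. filter_msl G) \<and> F = \<Union>\<F>)"
  proof -
    from a obtain \<F> where "finite \<F>" "card \<F> \<le> n" "\<forall>G\<in>\<F>. filter_msl G" "F = \<Union>\<F>" by blast
    then have "n_filter n F" using union_n_filter[OF assms(3)] by blast
    then show "prime_n_filter n F" using a unfolding prime_n_filter_def by blast
  qed
  have 3: "prime_upset F \<and> (\<exists>h. msl_hom_2n n h \<and> F = {x. h x \<noteq> {}})" if a: "prime_upset F \<and> (\<exists>\<F>. finite \<F> \<and> card \<F> \<le> n \<and> (\<forall>G\<in>\<F>. filter_msl G) \<and> F = \<Union>\<F>)"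
  proof -
    from a obtain \<F> where "finite \<F>" "card \<F> \<le> n" "\<forall>G\<in>\<F>. filter_msl G" "F = \<Union>\<F>" by blast
    then have "\<exists>h. msl_hom_2n n h \<and> F = {x. h x \<noteq> {}}" by (rule ii_to_iii)
    then show ?thesis using a by blast
  qed
  have 4: "prime_upset F \<and> (\<exists>\<F>. finite \<F> \<and> card \<F> \<le> n \<and> (\<forall>G\<in>\<F>. filter_msl G) \<and> F = \<Union>\<F>)" if a: "prime_upset F \<and> (\<exists>h. msl_hom_2n n h \<and> F = {x. h x \<noteq> {}})"
  proof -
    from a obtain h where "msl_hom_2n n h" "F = {x. h x \<noteq> {}}" by blast
    then have "\<exists>\<F>. finite \<F> \<and> card \<F> \<le> n \<and> (\<forall>G\<in>\<F>. filter_msl G) \<and> F = \<Union>\<F>"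
      by (rule iii_to_ii)
    then show ?thesis using a by blast
  qed
  show ?thesis
  proof (rule conjI)
    show "prime_n_filter n F \<longleftrightarrow> (prime_upset F \<and> (\<exists>\<F>. finite \<F> \<and> card \<F> \<le> n \<and> (\<forall>G\<in>\<F>. filter_msl G) \<and> F = \<Union>\<F>))" using 1 2 by (rule iffI)
    show "(prime_upset F \<and> (\<exists>\<F>. finite \<F> \<and> card \<F> \<le> n \<and> (\<forall>G\<in>\<F>. filter_msl G) \<and> F = \<Union>\<F>)) \<longleftrightarrow> (prime_upset F \<and> (\<exists>h. msl_hom_2n n h \<and> F = {x. h x \<noteq> {}}))" using 3 4 by (rule iffI)
  qed
qed

end
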